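(* Let $\{x^k\}_k$, $\{z^k\}_k$ be generated by the normal map-based stochastic proximal gradient method described in the context. Then for all integers $0\le m<n$ and every sample $\omega$ with $L(\omega)<\infty$ (for $L(\omega)=\infty$ the right-hand sides below are interpreted as $+\infty$), \[ d_{m,n}\le\max_{m<i\le n}\|z^i-z^m\|\le(1+\tau_{m,n}\bar\tau_{m,n})\big[\tau_{m,n}\|F^\lambda_{\mathrm{nor}}(z^m)\|+s_{m,n}\big], \] \[ \|e^{m,n}\|\le\bar\tau_{m,n}\tau_{m,n}^2\|F^\lambda_{\mathrm{nor}}(z^m)\|+(1+\bar\tau_{m,n}\tau_{m,n})s_{m,n}. \]
   Context: Let $\varphi:\mathbb{R}^d\to(-\infty,\infty]$ be convex, lower semicontinuous and proper, let $f:\mathbb{R}^d\to\mathbb{R}$ be continuously differentiable on an open set containing $\mathrm{dom}\,\varphi$, and set $\psi=f+\varphi$. For $\lambda>0$ let $\mathrm{prox}_{\lambda\varphi}(x)=\operatorname{argmin}_y\{\varphi(y)+\frac{1}{2\lambda}\|x-y\|^2\}$, $\mathrm{env}_{\lambda\varphi}(x)=\min_y\{\varphi(y)+\frac1{2\lambda}\|x-y\|^2\}$ (so $\nabla\mathrm{env}_{\lambda\varphi}(x)=(x-\mathrm{prox}_{\lambda\varphi}(x))/\lambda$), and define the normal map $F^\lambda_{\mathrm{nor}}(z)=\nabla f(\mathrm{prox}_{\lambda\varphi}(z))+\frac1\lambda(z-\mathrm{prox}_{\lambda\varphi}(z))$. Method: on a filtered probability space $(\Omega,\mathcal F,\{\mathcal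 F_k\}_k,\mathbb P)$, with $\lambda>0$, step sizes $\{\alpha_k\}_k\subset(0,\infty)$, deterministic $z^0$, $x^0=\mathrm{prox}_{\lambda\varphi}(z^0)$, and $\mathcal F_{k+1}$-measurable random vectors $g^k$, set $z^{k+1}=z^k-\alpha_k(g^k+\nabla\mathrm{env}_{\lambda\varphi}(z^k))$, $x^{k+1}=\mathrm{prox}_{\lambda\varphi}(z^{k+1})$, $k=0,1,\dots$. Let $e^k=g^k-\nabla f(x^k)$. Trajectory Lipschitz modulus: $L(\omega)=\sup_{\bar x\in\mathrm{cl}(\mathrm{conv}\{x^k(\omega)\}_k)}\mathrm{lip}\,\nabla f(\bar x)$, where $\mathrm{lip}\,\nabla f(\bar x)=\limsup_{x,x'\to\bar x,\,x\ne x'}\|\nabla f(x)-\nabla f(x')\|/\|x-x'\|$. Notation: $\tau_{m,n}=\sum_{i=m}^{n-1}\alpha_i$; $\bar\tau_{m,n}=(L+\frac2\lambda)\exp((L+\frac2\lambda)\tau_{m,n})$; $s_{m,n}=\max_{m<j\le n}\|\sum_{i=m}^{j-1}\alpha_ie^i\|$; $d_{m,n}=\max_{m<i\le n}\|x^i-x^m\|$; $e^{m,n}=-\sum_{i=m}^{n-1}\alpha_i[F^\lambda_{\mathrm{nor}}(z^i)-F^\lambda_{\mathrm{nor}}(z^m)]-\sum_{i=m}^{n-1}\alpha_ie^i$ (so that $z^n=z^m-\tau_{m,n}F^\lambda_{\mathrm{nor}}(z^m)+e^{m,n}$). *)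

theory Defs
  imports "HOL-Analysis.Analysis" "HOL-Probability.Probability"
begin

definition proper_fun :: "('a \<Rightarrow> ereal) \<Rightarrow> bool" where
  "proper_fun \<phi> \<longleftrightarrow> (\<forall>x. \<phi> x \<noteq> -\<infinity>) \<and> (\<exists>x. \<phi> x < \<infinity>)"

definition convex_fun :: "('a::real_vector \<Rightarrow> ereal) \<Rightarrow> bool" where
  "convex_fun \<phi> \<longleftrightarrow> (\<forall>x y t. 0 \<le> t \<and> t \<le> 1 \<longrightarrow>
      \<phi> ((1 - t) *\<^sub>R x + t *\<^sub>R y) \<le> ereal (1 - t) * \<phi> x + ereal t * \<phi> y)"

definition lsc_fun :: "('a::topological_space \<Rightarrow> ereal) \<Rightarrow> bool" where
  "lsc_fun \<phi> \<longleftrightarrow> (\<forall>x. \<phi> x \<le> Liminf (at x) \<phi>)"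

definition dom_fun :: "('a \<Rightarrow> ereal) \<Rightarrow> 'a set" where
  "dom_fun \<phi> = {x. \<phi> x < \<infinity>}"

text \<open>prox_{lam phi}(x) = argmin_y { phi(y) + 1/(2 lam) ||x - y||^2 } (unique under the standing assumptions).\<close>
definition prox :: "real \<Rightarrow> ('a::real_normed_vector \<Rightarrow> ereal) \<Rightarrow> 'a \<Rightarrow> 'a" where
  "prox lam \<phi> x = (THE y. \<forall>y'. \<phi> y + ereal (norm (x - y)^2 / (2 * lam))
                             \<le> \<phi> y' + ereal (norm (x - y')^2 / (2 * lam)))"

text \<open>gradient of the Moreau envelope: (x - prox x)/lam\<close>
definition grad_env :: "real \<Rightarrow> ('a::real_normed_vector \<Rightarrow> ereal) \<Rightarrow> 'a \<Rightarrow> 'a" where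
  "grad_env lam \<phi> x = (1 / lam) *\<^sub>R (x - prox lam \<phi> x)"

definition Fnor :: "('a \<Rightarrow> 'a) \<Rightarrow> real \<Rightarrow> ('a::real_normed_vector \<Rightarrow> ereal) \<Rightarrow> 'a \<Rightarrow> 'a" where
  "Fnor gf lam \<phi> z = gf (prox lam \<phi> z) + (1 / lam) *\<^sub>R (z - prox lam \<phi> z)"

definition lip :: "('a::real_normed_vector \<Rightarrow> 'b::real_normed_vector) \<Rightarrow> 'a \<Rightarrow> ereal" where
  "lip G xb = (INF \<delta>\<in>{0<..}. SUP p\<in>{(x, x'). x \<in> ball xb \<delta> \<and> x' \<in> ball xb \<delta> \<and> x \<noteq> x'}.
                 ereal (norm (G (fst p) - G (snd p)) / norm (fst p - snd p)))"

definition traj_lip :: "('a::real_normed_vector \<Rightarrow> 'a) \<Rightarrow> (nat \<Rightarrow> 'a) \<Rightarrow> ereal" where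
  "traj_lip gf xs = (SUP xb\<in>closure (convex hull (range xs)). lip gf xb)"

end

theory Submission
  imports Defs
begin


lemma lsc_open:
  fixes \<phi> :: "'a::metric_space \<Rightarrow> ereal"
  assumes "lsc_fun \<phi>" shows "open {y. c < \<phi> y}"
  unfolding open_dist
proof (intro ballI)
  fix x assume "x \<in> {y. c < \<phi> y}"
  hence cx: "c < \<phi> x" by simp
  hence "c < Liminf (at x) \<phi>" using assms unfolding lsc_fun_def by (meson order_less_le_trans)
  hence "\<forall>\<^sub>F y in at x. c < \<phi> y" by (rule less_LiminfD)
  then obtain d where d: "d > 0" "\<And>y. y \<noteq> x \<and> dist y x < d \<Longrightarrow> c < \<phi> y"
    unfolding eventually_at by auto
  show "\<exists>e>0. \<forall>y. dist y x < e \<longrightarrow> y \<in> {y. c < \<phi> y}"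
  proof (intro exI[of _ d] conjI allI impI)
    fix y assume "dist y x < d" thus "y \<in> {y. c < \<phi> y}" using d cx by (cases "y = x") auto
  qed (use d in auto)
qed

lemma lsc_attain:
  fixes h :: "'a::metric_space \<Rightarrow> ereal"
  assumes op: "\<And>c. open {y. c < h y}" and K: "compact K" "K \<noteq> {}"
  obtains y where "y \<in> K" "\<And>w. w \<in> K \<Longrightarrow> h y \<le> h w"
proof -
  define v where "v = (INF w\<in>K. h w)"
  have "\<exists>y\<in>K. h y = v"
  proof (rule ccontr)
    assume "\<not> (\<exists>y\<in>K. h y = v)"
    hence lt: "\<forall>y\<in>K. v < h y" unfolding v_def by (metis INF_lower order_le_less)
    have "K \<subseteq> (\<Union>c\<in>{c. v < c}. {y. c < h y})"
    proof
      fix y assume "y \<in> K"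
      then obtain c where "v < c" "c < h y" using lt dense by blast
      thus "y \<in> (\<Union>c\<in>{c. v < c}. {y. c < h y})" by blast
    qed
    then obtain C where C: "C \<subseteq> {c. v < c}" "finite C" "K \<subseteq> (\<Union>c\<in>C. {y. c < h y})"
      using compactE_image[OF K(1), of "{c. v < c}" "\<lambda>c. {y. c < h y}"] op by blast
    have "C \<noteq> {}" using C K(2) by auto
    define m where "m = Min C"
    have "v < m" unfolding m_def using C \<open>C \<noteq> {}\<close> by auto
    have "m \<le> h w" if wK: "w \<in> K" for w
    proof -
      obtain c where "c \<in> C" "c < h w" using C wK by blast
      thus ?thesis unfolding m_def using C(2) by (meson Min_le order.trans less_imp_le)
    qed
    hence "m \<le> v" unfolding v_def by (rule INF_greatest)
    thus False using \<open>v < m\<close> by simp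
  qed
  thus ?thesis using that unfolding v_def by (metis INF_lower)
qed



definition pmin :: "real \<Rightarrow> ('a::real_normed_vector \<Rightarrow> ereal) \<Rightarrow> 'a \<Rightarrow> 'a \<Rightarrow> bool" where
  "pmin lam \<phi> z y \<longleftrightarrow> (\<forall>y'. \<phi> y + ereal (norm (z - y)^2 / (2 * lam))
                             \<le> \<phi> y' + ereal (norm (z - y')^2 / (2 * lam)))"

lemma h_open:
  fixes \<phi> :: "'a::metric_space \<Rightarrow> ereal"
  assumes "lsc_fun \<phi>" "continuous_on UNIV q"
  shows "open {y. c < \<phi> y + ereal (q y)}"
proof -
  have eq: "{y. c < \<phi> y + ereal (q y)} = (\<Union>r. {y. ereal r < \<phi> y} \<inter> {y. c < ereal (r + q y)})"
  proof (intro set_eqI iffI)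
    fix y assume "y \<in> {y. c < \<phi> y + ereal (q y)}"
    then obtain r' where r': "c < ereal r'" "ereal r' < \<phi> y + ereal (q y)"
      using ereal_dense2 by auto
    have "ereal (r' - q y) < \<phi> y" using r'(2) by (cases "\<phi> y") auto
    moreover have "c < ereal (r' - q y + q y)" using r'(1) by simp
    ultimately show "y \<in> (\<Union>r. {y. ereal r < \<phi> y} \<inter> {y. c < ereal (r + q y)})" by blast
  next
    fix y assume "y \<in> (\<Union>r. {y. ereal r < \<phi> y} \<inter> {y. c < ereal (r + q y)})"
    then obtain r where r: "ereal r < \<phi> y" "c < ereal (r + q y)" by blast
    have "ereal (r + q y) < \<phi> y + ereal (q y)" using r(1) by (cases "\<phi> y") auto
    thus "y \<in> {y. c < \<phi> y + ereal (q y)}" using r(2) by simp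
  qed
  have "open {y. c < ereal (r + q y)}" for r
    by (rule open_Collect_less) (auto intro!: continuous_intros assms(2)[THEN continuous_on_subset])
  thus ?thesis unfolding eq using lsc_open[OF assms(1)] by (intro open_UN open_Int) auto
qed

lemma lin_lower:
  fixes \<phi> :: "'a::euclidean_space \<Rightarrow> ereal"
  assumes cv: "convex_fun \<phi>" and ls: "lsc_fun \<phi>" and pr: "proper_fun \<phi>" and a: "\<phi> x0 = ereal a"
  shows "\<exists>m0 K. K \<ge> 0 \<and> (\<forall>y. ereal (m0 - K * norm (y - x0)) \<le> \<phi> y)"
proof -
  obtain y1 where y1: "y1 \<in> cball x0 1" "\<And>w. w \<in> cball x0 1 \<Longrightarrow> \<phi> y1 \<le> \<phi> w"
    using lsc_attain[of \<phi> "cball x0 1"] lsc_open[OF ls] by auto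
  have "\<phi> y1 \<le> ereal a" using y1(2)[of x0] a by simp
  moreover have "\<phi> y1 \<noteq> -\<infinity>" using pr unfolding proper_fun_def by auto
  ultimately obtain m0 where m0: "\<phi> y1 = ereal m0" "m0 \<le> a" by (cases "\<phi> y1") auto
  define K where "K = a - m0"
  have "ereal (m0 - K * norm (y - x0)) \<le> \<phi> y" for y
  proof (cases "norm (y - x0) \<le> 1")
    case True
    hence "ereal m0 \<le> \<phi> y" using y1(2)[of y] m0 by (simp add: dist_norm norm_minus_commute)
    moreover have "m0 - K * norm (y - x0) \<le> m0" unfolding K_def using m0 by simp
    ultimately show ?thesis by (meson ereal_less_eq(3) order_trans)
  next
    case False
    define r where "r = norm (y - x0)"
    have r1: "r > 1" using False r_def by simp
    define t where "t = 1 / r"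
    have t: "0 \<le> t" "t \<le> 1" using r1 unfolding t_def by auto
    define y' where "y' = (1 - t) *\<^sub>R x0 + t *\<^sub>R y"
    have "y' - x0 = t *\<^sub>R (y - x0)" unfolding y'_def by (simp add: algebra_simps)
    hence "norm (y' - x0) = t * r" using t unfolding r_def by simp
    hence "norm (y' - x0) = 1" using r1 unfolding t_def by simp
    hence "y' \<in> cball x0 1" by (simp add: dist_norm norm_minus_commute)
    hence "ereal m0 \<le> \<phi> y'" using y1(2) m0 by metis
    also have "\<phi> y' \<le> ereal (1 - t) * \<phi> x0 + ereal t * \<phi> y"
      using cv t unfolding convex_fun_def y'_def by blast
    finally have ineq: "ereal m0 \<le> ereal (1 - t) * ereal a + ereal t * \<phi> y" using a by simp
    show ?thesis
    proof (cases "\<phi> y")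
      case (real b)
      have "m0 \<le> (1 - t) * a + t * b" using ineq real by simp
      hence "r * m0 \<le> r * ((1 - t) * a + t * b)" using r1 by simp
      also have "\<dots> = r * a - a + b" unfolding t_def using r1 by (simp add: field_simps)
      finally have "r * m0 \<le> r * a - a + b" .
      moreover have "(a - m0) * r = r * a - r * m0" by (simp add: algebra_simps)
      ultimately have "m0 - K * r \<le> b" unfolding K_def using m0 r1 by linarith
      thus ?thesis using real r_def by simp
    next
      case PInf thus ?thesis by simp
    next
      case MInf thus ?thesis using pr unfolding proper_fun_def by auto
    qed
  qed
  moreover have "K \<ge> 0" using m0 K_def by simp
  ultimately show ?thesis by blast
qed



lemma pmin_exists:
  fixes \<phi> :: "'a::euclidean_space \<Rightarrow> ereal"
  assumes cv: "convex_fun \<phi>" and ls: "lsc_fun \<phi>" and pr: "proper_fun \<phi>" and lam: "lam > 0"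
  shows "\<exists>y. pmin lam \<phi> z y"
proof -
  obtain x0 where "\<phi> x0 < \<infinity>" using pr unfolding proper_fun_def by auto
  moreover have "\<phi> x0 \<noteq> -\<infinity>" using pr unfolding proper_fun_def by auto
  ultimately obtain a where a: "\<phi> x0 = ereal a" by (cases "\<phi> x0") auto
  obtain m0 K where K: "K \<ge> 0" "\<And>y. ereal (m0 - K * norm (y - x0)) \<le> \<phi> y"
    using lin_lower[OF cv ls pr a] by blast
  define q where "q y = norm (z - y)^2 / (2 * lam)" for y
  have qc: "continuous_on UNIV q" unfolding q_def by (intro continuous_intros) (use lam in auto)
  define h where "h y = \<phi> y + ereal (q y)" for y
  define d0 where "d0 = norm (z - x0)"
  define B where "B = 2 * lam * (a - m0 + K * d0) + d0^2"
  define P where "P = 2 * lam * K"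
  define R where "R = d0 + P + \<bar>B\<bar> + 1"
  have P0: "P \<ge> 0" unfolding P_def using lam K by simp
  have x0R: "x0 \<in> cball x0 R" unfolding R_def d0_def using P0 by simp
  have hop: "open {y. c < h y}" for c unfolding h_def by (rule h_open[OF ls qc])
  obtain ys where ys: "ys \<in> cball x0 R" "\<And>w. w \<in> cball x0 R \<Longrightarrow> h ys \<le> h w"
    using lsc_attain[OF hop compact_cball, of x0 R] x0R by blast
  have far: "h x0 < h y" if yR: "y \<notin> cball x0 R" for y
  proof (cases "\<phi> y")
    case PInf thus ?thesis unfolding h_def using a by simp
  next
    case MInf thus ?thesis using pr unfolding proper_fun_def by auto
  next
    case (real b)
    define r where "r = norm (y - x0)"
    have "dist x0 y = r" unfolding r_def dist_norm by (rule norm_minus_commute)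
    hence rR: "r > R" using yR by simp
    define s where "s = r - d0"
    have s1: "s \<ge> P + \<bar>B\<bar> + 1" using rR unfolding s_def R_def by simp
    have "s \<ge> 1" using s1 P0 by simp
    have "s * s \<ge> s * (P + \<bar>B\<bar> + 1)" using s1 \<open>s \<ge> 1\<close> by (intro mult_left_mono) auto
    moreover have "s * (\<bar>B\<bar> + 1) \<ge> 1 * (\<bar>B\<bar> + 1)" using \<open>s \<ge> 1\<close> by (intro mult_right_mono) auto
    ultimately have ss: "s^2 > P * s + B" by (simp add: algebra_simps power2_eq_square)
    have "norm (y - x0) \<le> norm (y - z) + norm (z - x0)"
      using norm_triangle_ineq[of "y - z" "z - x0"] by simp
    moreover have "norm (y - z) = norm (z - y)" by (rule norm_minus_commute)
    ultimately have "norm (z - y) \<ge> r - d0" unfolding r_def d0_def by linarith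
    hence "norm (z - y) \<ge> s" unfolding s_def .
    hence "norm (z - y)^2 \<ge> s^2" using \<open>s \<ge> 1\<close>
      by (intro power_mono) auto
    hence qy: "q y \<ge> s^2 / (2 * lam)" unfolding q_def using lam by (simp add: divide_right_mono)
    have bl: "b \<ge> m0 - K * r" using K(2)[of y] real unfolding r_def by simp
    have i1: "2 * lam * b \<ge> 2 * lam * (m0 - K * r)" using bl lam by (intro mult_left_mono) auto
    have i2: "2 * lam * q y \<ge> s^2" using qy lam by (simp add: field_simps)
    have "2 * lam * (b + q y) = 2 * lam * b + 2 * lam * q y" by (simp add: distrib_left)
    hence c1: "2 * lam * (b + q y) \<ge> 2 * lam * (m0 - K * r) + s^2" using i1 i2 by linarith
    have c3: "2 * lam * (m0 - K * r) + P * s + B = 2 * lam * (a + q x0)"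
      unfolding P_def B_def s_def q_def d0_def using lam by (simp add: field_simps)
    have "2 * lam * (a + q x0) < 2 * lam * (b + q y)" using c1 c3 ss by linarith
    hence "a + q x0 < b + q y" using lam by simp
    thus ?thesis unfolding h_def using a real by simp
  qed
  have "pmin lam \<phi> z ys" unfolding pmin_def
  proof
    fix w show "\<phi> ys + ereal (norm (z - ys)^2 / (2 * lam)) \<le> \<phi> w + ereal (norm (z - w)^2 / (2 * lam))"
    proof (cases "w \<in> cball x0 R")
      case True thus ?thesis using ys(2)[of w] unfolding h_def q_def by simp
    next
      case False
      have "h ys \<le> h x0" using ys(2) x0R by simp
      also have "\<dots> \<le> h w" using far[OF False] by simp
      finally show ?thesis unfolding h_def q_def by simp
    qed
  qed
  thus ?thesis by blast
qed



lemma eps_lemma: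
  fixes X Y C :: real
  assumes "C \<ge> 0" "\<And>t. 0 < t \<Longrightarrow> t \<le> 1 \<Longrightarrow> X \<le> Y + t * C"
  shows "X \<le> Y"
proof (rule field_le_epsilon)
  fix e :: real assume e: "e > 0"
  define t where "t = min 1 (e / (C + 1))"
  have t: "0 < t" "t \<le> 1" unfolding t_def using e assms(1) by auto
  have "t * C \<le> (e / (C + 1)) * C" unfolding t_def using assms(1) by (intro mult_right_mono) auto
  also have "\<dots> \<le> e" using e assms(1) by (simp add: field_simps)
  finally show "X \<le> Y + e" using assms(2)[OF t] by linarith
qed

lemma pmin_VI:
  fixes \<phi> :: "'a::euclidean_space \<Rightarrow> ereal"
  assumes cv: "convex_fun \<phi>" and pr: "proper_fun \<phi>" and lam: "lam > 0" and pm: "pmin lam \<phi> z y"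
  shows "\<exists>a. \<phi> y = ereal a \<and> (\<forall>w b. \<phi> w = ereal b \<longrightarrow> a + inner (z - y) (w - y) / lam \<le> b)"
proof -
  obtain x0 where x0: "\<phi> x0 < \<infinity>" using pr unfolding proper_fun_def by auto
  have "\<phi> y + ereal (norm (z - y)^2 / (2 * lam)) \<le> \<phi> x0 + ereal (norm (z - x0)^2 / (2 * lam))"
    using pm unfolding pmin_def by blast
  also have "\<dots> < \<infinity>" using x0 by simp
  finally have "\<phi> y < \<infinity>" by auto
  moreover have "\<phi> y \<noteq> -\<infinity>" using pr unfolding proper_fun_def by auto
  ultimately obtain a where a: "\<phi> y = ereal a" by (cases "\<phi> y") auto
  have "a + inner (z - y) (w - y) / lam \<le> b" if b: "\<phi> w = ereal b" for w b
  proof (rule eps_lemma[where C = "norm (w - y)^2 / (2 * lam)"])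
    show "0 \<le> norm (w - y)^2 / (2 * lam)" using lam by simp
    fix t :: real assume t: "0 < t" "t \<le> 1"
    define p where "p = (1 - t) *\<^sub>R y + t *\<^sub>R w"
    have "\<phi> p \<le> ereal (1 - t) * \<phi> y + ereal t * \<phi> w"
      using cv t unfolding convex_fun_def p_def by auto
    hence pp: "\<phi> p \<le> ereal ((1 - t) * a + t * b)" using a b by simp
    have "ereal a + ereal (norm (z - y)^2 / (2 * lam)) \<le> \<phi> p + ereal (norm (z - p)^2 / (2 * lam))"
      using pm a unfolding pmin_def by metis
    also have "\<dots> \<le> ereal ((1 - t) * a + t * b) + ereal (norm (z - p)^2 / (2 * lam))"
      using pp by (rule add_right_mono)
    finally have ineq: "a + norm (z - y)^2 / (2 * lam) \<le> (1 - t) * a + t * b + norm (z - p)^2 / (2 * lam)"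
      by simp
    have zp: "z - p = (z - y) - t *\<^sub>R (w - y)" unfolding p_def by (simp add: algebra_simps)
    define N1 where "N1 = norm (z - y)^2"
    define Np where "Np = norm (z - p)^2"
    define I where "I = inner (z - y) (w - y)"
    define W where "W = norm (w - y)^2"
    have Np: "Np = N1 - 2 * t * I + t^2 * W"
      unfolding Np_def N1_def I_def W_def zp power2_norm_eq_inner
      by (simp add: inner_diff_left inner_diff_right inner_commute algebra_simps power2_eq_square)
    have ineq': "a + N1 / (2 * lam) \<le> (1 - t) * a + t * b + Np / (2 * lam)"
      using ineq unfolding N1_def Np_def .
    have "2 * lam * (a + N1 / (2 * lam)) \<le> 2 * lam * ((1 - t) * a + t * b + Np / (2 * lam))"
      using ineq' lam by (intro mult_left_mono) auto
    hence m: "2 * lam * a + N1 \<le> 2 * lam * ((1 - t) * a + t * b) + Np"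
      using lam by (simp add: distrib_left)
    have e1: "2 * lam * ((1 - t) * a + t * b) = 2 * lam * a - t * (2 * lam * a) + t * (2 * lam * b)"
      by (simp add: algebra_simps)
    have e2: "t^2 * W = t * (t * W)" by (simp add: power2_eq_square)
    have e3: "2 * t * I = t * (2 * I)" by simp
    have "t * (2 * lam * a) \<le> t * (2 * lam * b) - t * (2 * I) + t * (t * W)"
      using m e1 e2 e3 Np by linarith
    hence "t * (2 * lam * a) \<le> t * (2 * lam * b - 2 * inner (z - y) (w - y) + t * norm (w - y)^2)"
      unfolding I_def W_def by (simp add: algebra_simps)
    hence "2 * lam * a \<le> 2 * lam * b - 2 * inner (z - y) (w - y) + t * norm (w - y)^2"
      using t by simp
    moreover have "2 * lam * (a + inner (z - y) (w - y) / lam) = 2 * lam * a + 2 * inner (z - y) (w - y)"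
      using lam by (simp add: field_simps)
    moreover have "2 * lam * (b + t * (norm (w - y)^2 / (2 * lam))) = 2 * lam * b + t * norm (w - y)^2"
      using lam by (simp add: field_simps)
    ultimately have "2 * lam * (a + inner (z - y) (w - y) / lam) \<le> 2 * lam * (b + t * (norm (w - y)^2 / (2 * lam)))"
      by linarith
    thus "a + inner (z - y) (w - y) / lam \<le> b + t * (norm (w - y)^2 / (2 * lam))"
      using lam by (simp add: mult_le_cancel_left_pos)
  qed
  thus ?thesis using a by blast
qed

lemma pmin_nonexp:
  fixes \<phi> :: "'a::euclidean_space \<Rightarrow> ereal"
  assumes cv: "convex_fun \<phi>" and pr: "proper_fun \<phi>" and lam: "lam > 0"
    and p: "pmin lam \<phi> z p" and q: "pmin lam \<phi> z' q"
  shows "norm (p - q) \<le> norm (z - z')"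
proof -
  obtain a where a: "\<phi> p = ereal a" "\<And>w b. \<phi> w = ereal b \<Longrightarrow> a + inner (z - p) (w - p) / lam \<le> b"
    using pmin_VI[OF cv pr lam p] by blast
  obtain b where b: "\<phi> q = ereal b" "\<And>w c. \<phi> w = ereal c \<Longrightarrow> b + inner (z' - q) (w - q) / lam \<le> c"
    using pmin_VI[OF cv pr lam q] by blast
  have "a + inner (z - p) (q - p) / lam \<le> b" using a(2)[OF b(1)] .
  moreover have "b + inner (z' - q) (p - q) / lam \<le> a" using b(2)[OF a(1)] .
  ultimately have "inner (z - p) (q - p) / lam + inner (z' - q) (p - q) / lam \<le> 0" by linarith
  hence "inner (z - p) (q - p) + inner (z' - q) (p - q) \<le> 0" using lam
    by (simp add: add_divide_distrib[symmetric] divide_le_0_iff)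
  moreover have "inner (z - p) (q - p) + inner (z' - q) (p - q) = norm (p - q)^2 - inner (z - z') (p - q)"
    unfolding power2_norm_eq_inner by (simp add: inner_diff_left inner_diff_right inner_commute algebra_simps)
  ultimately have "norm (p - q)^2 \<le> inner (z - z') (p - q)" by linarith
  also have "\<dots> \<le> norm (z - z') * norm (p - q)" by (rule norm_cauchy_schwarz)
  finally have "norm (p - q) * norm (p - q) \<le> norm (z - z') * norm (p - q)" by (simp add: power2_eq_square)
  thus ?thesis by (cases "norm (p - q) = 0") (auto simp: mult_le_cancel_right)
qed

lemma prox_pmin:
  fixes \<phi> :: "'a::euclidean_space \<Rightarrow> ereal"
  assumes cv: "convex_fun \<phi>" and ls: "lsc_fun \<phi>" and pr: "proper_fun \<phi>" and lam: "lam > 0"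
  shows "pmin lam \<phi> z (prox lam \<phi> z)"
proof -
  have "\<exists>!y. pmin lam \<phi> z y"
  proof (rule ex_ex1I)
    show "\<exists>y. pmin lam \<phi> z y" by (rule pmin_exists[OF cv ls pr lam])
    fix y y' assume "pmin lam \<phi> z y" "pmin lam \<phi> z y'"
    from pmin_nonexp[OF cv pr lam this] show "y = y'" by simp
  qed
  hence "pmin lam \<phi> z (THE y. pmin lam \<phi> z y)" by (rule theI')
  thus ?thesis unfolding prox_def pmin_def .
qed

lemma prox_nonexp:
  fixes \<phi> :: "'a::euclidean_space \<Rightarrow> ereal"
  assumes cv: "convex_fun \<phi>" and ls: "lsc_fun \<phi>" and pr: "proper_fun \<phi>" and lam: "lam > 0"
  shows "norm (prox lam \<phi> z - prox lam \<phi> z') \<le> norm (z - z')"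
  by (rule pmin_nonexp[OF cv pr lam prox_pmin[OF cv ls pr lam] prox_pmin[OF cv ls pr lam]])



lemma lip_local:
  fixes G :: "'a::real_normed_vector \<Rightarrow> 'b::real_normed_vector"
  assumes "lip G p < ereal c"
  shows "\<exists>d>0. \<forall>x\<in>ball p d. \<forall>x'\<in>ball p d. norm (G x - G x') \<le> c * norm (x - x')"
proof -
  obtain d where d: "d > 0" and S: "(SUP q\<in>{(x, x'). x \<in> ball p d \<and> x' \<in> ball p d \<and> x \<noteq> x'}.
                 ereal (norm (G (fst q) - G (snd q)) / norm (fst q - snd q))) < ereal c"
    using assms unfolding lip_def INF_less_iff by auto
  have "norm (G x - G x') \<le> c * norm (x - x')" if xx: "x \<in> ball p d" "x' \<in> ball p d" for x x'
  proof (cases "x = x'")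
    case True thus ?thesis by simp
  next
    case False
    hence "(x, x') \<in> {(x, x'). x \<in> ball p d \<and> x' \<in> ball p d \<and> x \<noteq> x'}" using xx by simp
    hence "ereal (norm (G x - G x') / norm (x - x')) < ereal c"
      using S by (metis (no_types, lifting) SUP_upper fst_conv snd_conv order_le_less_trans)
    hence "norm (G x - G x') / norm (x - x') < c" by simp
    thus ?thesis using False by (simp add: divide_less_eq less_imp_le)
  qed
  thus ?thesis using d by blast
qed

lemma lip_chain_eps:
  fixes G :: "'a::real_normed_vector \<Rightarrow> 'b::real_normed_vector"
  assumes lp: "\<And>p. p \<in> closed_segment a b \<Longrightarrow> lip G p < ereal c"
  shows "norm (G b - G a) \<le> c * norm (b - a)"
proof -
  have "\<forall>p\<in>closed_segment a b. \<exists>d>0. \<forall>x\<in>ball p d. \<forall>x'\<in>ball p d. norm (G x - G x') \<le> c * norm (x - x')"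
    using lip_local lp by blast
  then obtain \<delta> where \<delta>: "\<And>p. p \<in> closed_segment a b \<Longrightarrow> \<delta> p > 0"
    "\<And>p x x'. p \<in> closed_segment a b \<Longrightarrow> x \<in> ball p (\<delta> p) \<Longrightarrow> x' \<in> ball p (\<delta> p) \<Longrightarrow> norm (G x - G x') \<le> c * norm (x - x')"
    by metis
  have cov: "closed_segment a b \<subseteq> \<Union>((\<lambda>p. ball p (\<delta> p)) ` closed_segment a b)"
    using \<delta>(1) by auto
  obtain \<eta> where \<eta>: "\<eta> > 0" "\<And>x. x \<in> closed_segment a b \<Longrightarrow> \<exists>B\<in>(\<lambda>p. ball p (\<delta> p)) ` closed_segment a b. ball x \<eta> \<subseteq> B"
    using Heine_Borel_lemma[OF compact_segment cov] by auto
  define D where "D = norm (b - a)"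
  obtain n :: nat where n: "D / \<eta> < real n" using reals_Archimedean2 by blast
  define N where "N = Suc n"
  have N: "N > D / \<eta>" "N \<ge> 1" using n unfolding N_def by auto
  have Npos: "real N > 0" using N by simp
  define P where "P k = a + (real k / N) *\<^sub>R (b - a)" for k
  have Pseg: "P k \<in> closed_segment a b" if "k \<le> N" for k
  proof -
    have "P k = (1 - real k / N) *\<^sub>R a + (real k / N) *\<^sub>R b"
      unfolding P_def by (simp add: scaleR_diff_right scaleR_diff_left)
    moreover have "0 \<le> real k / N" "real k / N \<le> 1" using that Npos by auto
    ultimately show ?thesis unfolding in_segment by blast
  qed
  have Pdiff: "P (Suc k) - P k = (1 / N) *\<^sub>R (b - a)" for k
  proof -
    have "real (Suc k) / N = real k / N + 1 / N" by (simp add: add_divide_distrib)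
    thus ?thesis unfolding P_def by (simp add: scaleR_add_left)
  qed
  have step: "norm (G (P (Suc k)) - G (P k)) \<le> c * (D / N)" if k: "k < N" for k
  proof -
    have Pk: "P k \<in> closed_segment a b" using Pseg k by simp
    obtain p where p: "p \<in> closed_segment a b" "ball (P k) \<eta> \<subseteq> ball p (\<delta> p)" using \<eta>(2)[OF Pk] by auto
    have nd: "norm (P (Suc k) - P k) = D / N" unfolding Pdiff D_def using Npos by simp
    have "D / N < \<eta>" using N \<eta>(1) Npos by (simp add: divide_less_eq mult.commute)
    hence "P (Suc k) \<in> ball (P k) \<eta>" using nd by (simp add: dist_norm norm_minus_commute)
    moreover have "P k \<in> ball (P k) \<eta>" using \<eta>(1) by simp
    ultimately have "norm (G (P (Suc k)) - G (P k)) \<le> c * norm (P (Suc k) - P k)"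
      using \<delta>(2)[OF p(1)] p(2) by blast
    thus ?thesis using nd by simp
  qed
  have "G b - G a = (\<Sum>k<N. G (P (Suc k)) - G (P k))"
  proof -
    have "P N = b" unfolding P_def using Npos by simp
    moreover have "P 0 = a" unfolding P_def by simp
    ultimately show ?thesis using sum_lessThan_telescope[of "\<lambda>k. G (P k)" N] by simp
  qed
  hence "norm (G b - G a) \<le> (\<Sum>k<N. norm (G (P (Suc k)) - G (P k)))"
    by (simp add: norm_sum)
  also have "\<dots> \<le> (\<Sum>k<N. c * (D / N))" by (intro sum_mono step) simp
  also have "\<dots> = c * D" using Npos by simp
  finally show ?thesis unfolding D_def .
qed

lemma lip_chain:
  fixes G :: "'a::real_normed_vector \<Rightarrow> 'b::real_normed_vector"
  assumes lp: "\<And>p. p \<in> closed_segment a b \<Longrightarrow> lip G p \<le> ereal L"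
  shows "norm (G b - G a) \<le> L * norm (b - a)"
proof (rule field_le_epsilon)
  fix e :: real assume e: "e > 0"
  define c where "c = L + e / (norm (b - a) + 1)"
  have "e / (norm (b - a) + 1) > 0" using e by (simp add: add_nonneg_pos)
  hence Lc: "ereal L < ereal c" unfolding c_def by simp
  have "lip G p < ereal c" if "p \<in> closed_segment a b" for p
    using lp[OF that] Lc by (rule order_le_less_trans)
  hence "norm (G b - G a) \<le> c * norm (b - a)" by (rule lip_chain_eps)
  also have "\<dots> = L * norm (b - a) + e * (norm (b - a) / (norm (b - a) + 1))"
    unfolding c_def by (simp add: algebra_simps)
  also have "\<dots> \<le> L * norm (b - a) + e * 1"
  proof -
    have "norm (b - a) / (norm (b - a) + 1) \<le> 1" by (simp add: divide_le_eq_1 add_nonneg_pos)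
    thus ?thesis using e by (intro add_left_mono mult_left_mono) auto
  qed
  finally show "norm (G b - G a) \<le> L * norm (b - a) + e" by simp
qed



lemma lip_nonneg:
  fixes G :: "'a::euclidean_space \<Rightarrow> 'b::real_normed_vector"
  shows "0 \<le> lip G p"
  unfolding lip_def
proof (rule INF_greatest)
  fix d :: real assume "d \<in> {0<..}"
  hence d: "d > 0" by simp
  obtain v :: 'a where v: "v \<in> Basis" using nonempty_Basis by blast
  have nv: "norm v = 1" using v by simp
  define p' where "p' = p + (d / 2) *\<^sub>R v"
  have "dist p p' = d / 2" unfolding p'_def dist_norm using d nv by simp
  hence "(p, p') \<in> {(x, x'). x \<in> ball p d \<and> x' \<in> ball p d \<and> x \<noteq> x'}" using d by auto
  hence "ereal (norm (G (fst (p, p')) - G (snd (p, p'))) / norm (fst (p, p') - snd (p, p')))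
     \<le> (SUP q\<in>{(x, x'). x \<in> ball p d \<and> x' \<in> ball p d \<and> x \<noteq> x'}.
                 ereal (norm (G (fst q) - G (snd q)) / norm (fst q - snd q)))"
    by (rule SUP_upper)
  moreover have "0 \<le> ereal (norm (G (fst (p, p')) - G (snd (p, p'))) / norm (fst (p, p') - snd (p, p')))"
    by simp
  ultimately show "0 \<le> (SUP q\<in>{(x, x'). x \<in> ball p d \<and> x' \<in> ball p d \<and> x \<noteq> x'}.
                 ereal (norm (G (fst q) - G (snd q)) / norm (fst q - snd q)))" by (rule order_trans[rotated])
qed

lemma exp_aux: "exp x \<le> 1 + x * exp x" for x :: real
proof -
  have "1 + (-x) \<le> exp (-x)" by (rule exp_ge_add_one_self)
  hence "exp x * (1 - x) \<le> exp x * exp (-x)" by (intro mult_left_mono) auto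
  also have "\<dots> = 1" by (simp add: exp_minus)
  finally show ?thesis by (simp add: algebra_simps)
qed

lemma exp_sum_aux:
  fixes c :: real and \<alpha> :: "nat \<Rightarrow> real"
  assumes "m \<le> j"
  shows "1 + (\<Sum>i\<in>{m..<j}. c * \<alpha> i * exp (c * (\<Sum>k\<in>{m..<i}. \<alpha> k))) \<le> exp (c * (\<Sum>k\<in>{m..<j}. \<alpha> k))"
  using assms
proof (induction j rule: dec_induct)
  case base thus ?case by simp
next
  case (step j)
  define E where "E = exp (c * (\<Sum>k\<in>{m..<j}. \<alpha> k))"
  have "exp (c * (\<Sum>k\<in>{m..<Suc j}. \<alpha> k)) = E * exp (c * \<alpha> j)"
    unfolding E_def using step(1) by (simp add: distrib_left exp_add)
  also have "\<dots> \<ge> E * (1 + c * \<alpha> j)" unfolding E_def by (intro mult_left_mono) (auto simp: exp_ge_add_one_self)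
  finally have "E + c * \<alpha> j * E \<le> exp (c * (\<Sum>k\<in>{m..<Suc j}. \<alpha> k))" by (simp add: algebra_simps)
  moreover have "(\<Sum>i\<in>{m..<Suc j}. c * \<alpha> i * exp (c * (\<Sum>k\<in>{m..<i}. \<alpha> k)))
     = (\<Sum>i\<in>{m..<j}. c * \<alpha> i * exp (c * (\<Sum>k\<in>{m..<i}. \<alpha> k))) + c * \<alpha> j * E"
    unfolding E_def using step(1) by simp
  ultimately show ?case using step(3) unfolding E_def by linarith
qed



theorem lemma2p7:
  fixes \<phi> :: "'a::euclidean_space \<Rightarrow> ereal"
    and f :: "'a \<Rightarrow> real" and gf :: "'a \<Rightarrow> 'a" and U :: "'a set"
    and M :: "'w measure" and Fl :: "nat \<Rightarrow> 'w measure"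
    and lam :: real and \<alpha> :: "nat \<Rightarrow> real" and z0 :: 'a
    and z x g :: "nat \<Rightarrow> 'w \<Rightarrow> 'a"
    and m n :: nat and \<omega> :: 'w
  assumes phi: "convex_fun \<phi>" "lsc_fun \<phi>" "proper_fun \<phi>"
    and U: "open U" "dom_fun \<phi> \<subseteq> U"
    and f_grad: "\<And>y. y \<in> U \<Longrightarrow> (f has_derivative (\<lambda>h. gf y \<bullet> h)) (at y)"
    and f_C1: "continuous_on U gf"
    and M: "prob_space M"
    and Fl: "filtration (space M) Fl" "\<And>k. sets (Fl k) \<subseteq> sets M"
    and lam: "lam > 0"
    and alpha: "\<And>k. \<alpha> k > 0"
    and z_0: "\<And>w. z 0 w = z0"
    and x_def: "\<And>k w. x k w = prox lam \<phi> (z k w)"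
    and g_meas: "\<And>k. g k \<in> borel_measurable (Fl (Suc k))"
    and z_step: "\<And>k w. z (Suc k) w = z k w - \<alpha> k *\<^sub>R (g k w + grad_env lam \<phi> (z k w))"
    and mn: "m < n"
    and w: "\<omega> \<in> space M"
    and Lfin: "traj_lip gf (\<lambda>k. x k \<omega>) < \<infinity>"
  shows
    "let L = real_of_ereal (traj_lip gf (\<lambda>k. x k \<omega>));
         e = (\<lambda>k. g k \<omega> - gf (x k \<omega>));
         \<tau> = (\<Sum>i\<in>{m..<n}. \<alpha> i);
         \<tau>b = (L + 2 / lam) * exp ((L + 2 / lam) * \<tau>);
         s = Max ((\<lambda>j. norm (\<Sum>i\<in>{m..<j}. \<alpha> i *\<^sub>R e i)) ` {m<..n});
         d = Max ((\<lambda>i. norm (x i \<omega> - x m \<omega>)) ` {m<..n});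
         Fm = Fnor gf lam \<phi> (z m \<omega>);
         emn = - (\<Sum>i\<in>{m..<n}. \<alpha> i *\<^sub>R (Fnor gf lam \<phi> (z i \<omega>) - Fm))
               - (\<Sum>i\<in>{m..<n}. \<alpha> i *\<^sub>R e i)
     in d \<le> Max ((\<lambda>i. norm (z i \<omega> - z m \<omega>)) ` {m<..n})
      \<and> Max ((\<lambda>i. norm (z i \<omega> - z m \<omega>)) ` {m<..n}) \<le> (1 + \<tau> * \<tau>b) * (\<tau> * norm Fm + s)
      \<and> norm emn \<le> \<tau>b * \<tau>^2 * norm Fm + (1 + \<tau>b * \<tau>) * s"
proof -
  define xx where "xx i = x i \<omega>" for i
  define zz where "zz i = z i \<omega>" for i
  define L where "L = real_of_ereal (traj_lip gf (\<lambda>k. x k \<omega>))"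
  define e where "e = (\<lambda>k. g k \<omega> - gf (x k \<omega>))"
  define \<tau> where "\<tau> = (\<Sum>i\<in>{m..<n}. \<alpha> i)"
  define c where "c = L + 2 / lam"
  define \<tau>b where "\<tau>b = c * exp (c * \<tau>)"
  define s where "s = Max ((\<lambda>j. norm (\<Sum>i\<in>{m..<j}. \<alpha> i *\<^sub>R e i)) ` {m<..n})"
  define d where "d = Max ((\<lambda>i. norm (x i \<omega> - x m \<omega>)) ` {m<..n})"
  define Fz where "Fz i = Fnor gf lam \<phi> (z i \<omega>)" for i
  define Fm where "Fm = Fnor gf lam \<phi> (z m \<omega>)"
  define emn where "emn = - (\<Sum>i\<in>{m..<n}. \<alpha> i *\<^sub>R (Fnor gf lam \<phi> (z i \<omega>) - Fm))
               - (\<Sum>i\<in>{m..<n}. \<alpha> i *\<^sub>R e i)"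
  define u where "u i = norm (zz i - zz m)" for i
  define T where "T j = (\<Sum>k\<in>{m..<j}. \<alpha> k)" for j
  define Mz where "Mz = Max ((\<lambda>i. norm (z i \<omega> - z m \<omega>)) ` {m<..n})"
  define A where "A = \<tau> * norm Fm + s"

  have xhull: "xx i \<in> closure (convex hull (range xx))" for i
    by (meson closure_subset hull_inc rangeI subsetD)
  have tl0: "0 \<le> traj_lip gf xx"
    unfolding traj_lip_def using xhull[of 0] lip_nonneg[of gf "xx 0"]
    by (meson SUP_upper order_trans)
  have TL: "traj_lip gf xx = ereal L"
    using tl0 Lfin unfolding L_def xx_def[symmetric] by (cases "traj_lip gf xx") auto
  have L0: "L \<ge> 0" using tl0 TL by simp
  have "2 / lam > 0" using lam by simp
  hence c0: "c > 0" unfolding c_def using L0 by linarith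
  have lipx: "norm (gf (xx i) - gf (xx j)) \<le> L * norm (xx i - xx j)" for i j
  proof (rule lip_chain)
    fix p assume p: "p \<in> closed_segment (xx j) (xx i)"
    have "closed_segment (xx j) (xx i) \<subseteq> convex hull (range xx)"
      unfolding segment_convex_hull by (intro hull_mono) auto
    hence "p \<in> closure (convex hull (range xx))" using p closure_subset by blast
    hence "lip gf p \<le> traj_lip gf xx" unfolding traj_lip_def by (rule SUP_upper)
    thus "lip gf p \<le> ereal L" using TL by simp
  qed
  have nonexp: "norm (xx i - xx j) \<le> norm (zz i - zz j)" for i j
    unfolding xx_def zz_def x_def by (rule prox_nonexp[OF phi lam])
  have Flip: "norm (Fz i - Fz j) \<le> c * norm (zz i - zz j)" for i j
  proof -
    have "Fz i - Fz j = (gf (xx i) - gf (xx j)) + (1 / lam) *\<^sub>R ((zz i - zz j) - (xx i - xx j))"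
      unfolding Fz_def Fnor_def xx_def zz_def x_def by (simp add: algebra_simps)
    hence "norm (Fz i - Fz j) \<le> norm (gf (xx i) - gf (xx j)) + (1 / lam) * norm ((zz i - zz j) - (xx i - xx j))"
      using lam by (metis norm_triangle_ineq norm_scaleR abs_of_pos zero_less_divide_1_iff)
    also have "\<dots> \<le> L * norm (zz i - zz j) + (1 / lam) * (2 * norm (zz i - zz j))"
    proof (intro add_mono mult_left_mono)
      show "norm (gf (xx i) - gf (xx j)) \<le> L * norm (zz i - zz j)"
        using lipx[of i j] nonexp[of i j] L0 by (meson mult_left_mono order_trans)
      show "norm (zz i - zz j - (xx i - xx j)) \<le> 2 * norm (zz i - zz j)"
        using norm_triangle_ineq4[of "zz i - zz j" "xx i - xx j"] nonexp[of i j] by linarith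
    qed (use lam in auto)
    also have "\<dots> = c * norm (zz i - zz j)" unfolding c_def by (simp add: algebra_simps)
    finally show ?thesis .
  qed

  have zrec: "zz (Suc k) = zz k - \<alpha> k *\<^sub>R (Fz k + e k)" for k
    unfolding zz_def Fz_def e_def z_step[of k \<omega>] Fnor_def grad_env_def x_def by simp
  have zsum: "zz (m + j) - zz m = - (\<Sum>i\<in>{m..<m + j}. \<alpha> i *\<^sub>R (Fz i + e i))" for j
  proof (induction j)
    case 0 thus ?case by simp
  next
    case (Suc j)
    have b: "zz (m + Suc j) - zz m = (zz (m + j) - zz m) - \<alpha> (m + j) *\<^sub>R (Fz (m + j) + e (m + j))"
      using zrec[of "m + j"] by simp
    have "zz (m + Suc j) - zz m = - (\<Sum>i\<in>{m..<m + j}. \<alpha> i *\<^sub>R (Fz i + e i)) - \<alpha> (m + j) *\<^sub>R (Fz (m + j) + e (m + j))"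
      unfolding b Suc.IH ..
    also have "\<dots> = - (\<Sum>i\<in>{m..<m + Suc j}. \<alpha> i *\<^sub>R (Fz i + e i))" by simp
    finally show ?case .
  qed
  have zsum': "zz j - zz m = - (T j *\<^sub>R Fm + (\<Sum>i\<in>{m..<j}. \<alpha> i *\<^sub>R (Fz i - Fm)) + (\<Sum>i\<in>{m..<j}. \<alpha> i *\<^sub>R e i))"
    if "m \<le> j" for j
  proof -
    define k where "k = j - m"
    have j: "j = m + k" using that unfolding k_def by simp
    have eq1: "\<alpha> i *\<^sub>R (Fz i + e i) = (\<alpha> i *\<^sub>R Fm + \<alpha> i *\<^sub>R (Fz i - Fm)) + \<alpha> i *\<^sub>R e i" for i
      by (simp add: scaleR_right_distrib scaleR_right_diff_distrib)
    have "(\<Sum>i\<in>{m..<j}. \<alpha> i *\<^sub>R (Fz i + e i))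
        = (\<Sum>i\<in>{m..<j}. (\<alpha> i *\<^sub>R Fm + \<alpha> i *\<^sub>R (Fz i - Fm)) + \<alpha> i *\<^sub>R e i)"
      by (simp only: eq1)
    also have "\<dots> = ((\<Sum>i\<in>{m..<j}. \<alpha> i *\<^sub>R Fm) + (\<Sum>i\<in>{m..<j}. \<alpha> i *\<^sub>R (Fz i - Fm))) + (\<Sum>i\<in>{m..<j}. \<alpha> i *\<^sub>R e i)"
      by (simp only: sum.distrib)
    also have "(\<Sum>i\<in>{m..<j}. \<alpha> i *\<^sub>R Fm) = T j *\<^sub>R Fm"
      unfolding T_def by (rule scaleR_sum_left[symmetric])
    finally have "(\<Sum>i\<in>{m..<j}. \<alpha> i *\<^sub>R (Fz i + e i)) = T j *\<^sub>R Fm + (\<Sum>i\<in>{m..<j}. \<alpha> i *\<^sub>R (Fz i - Fm)) + (\<Sum>i\<in>{m..<j}. \<alpha> i *\<^sub>R e i)" .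
    moreover have "zz j - zz m = - (\<Sum>i\<in>{m..<j}. \<alpha> i *\<^sub>R (Fz i + e i))"
      unfolding j by (rule zsum)
    ultimately show ?thesis by simp
  qed

  have fin: "finite {m<..n}" and ne: "{m<..n} \<noteq> {}" using mn by auto
  have s_ge: "norm (\<Sum>i\<in>{m..<j}. \<alpha> i *\<^sub>R e i) \<le> s" if "j \<in> {m<..n}" for j
    unfolding s_def using fin that by (intro Max_ge) auto
  have s0: "s \<ge> 0" using s_ge[of n] mn by (meson greaterThanAtMost_iff le_refl norm_ge_zero order_trans)
  have T_le: "T j \<le> \<tau>" if "j \<le> n" for j
    unfolding T_def \<tau>_def using that alpha by (intro sum_mono2) (auto intro: less_imp_le)
  have T0: "T j \<ge> 0" for j unfolding T_def using alpha by (intro sum_nonneg) (auto intro: less_imp_le)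
  have A0: "A \<ge> 0" unfolding A_def using s0 T0[of n] unfolding T_def \<tau>_def by simp
  have Fm_eq: "Fm = Fz m" unfolding Fm_def Fz_def by simp
  have key: "u j \<le> A + c * (\<Sum>i\<in>{m..<j}. \<alpha> i * u i)" if j: "m < j" "j \<le> n" for j
  proof -
    have "u j = norm (T j *\<^sub>R Fm + (\<Sum>i\<in>{m..<j}. \<alpha> i *\<^sub>R (Fz i - Fm)) + (\<Sum>i\<in>{m..<j}. \<alpha> i *\<^sub>R e i))"
      unfolding u_def zsum'[OF less_imp_le[OF j(1)]] by (rule norm_minus_cancel)
    also have "\<dots> \<le> norm (T j *\<^sub>R Fm) + norm (\<Sum>i\<in>{m..<j}. \<alpha> i *\<^sub>R (Fz i - Fm)) + norm (\<Sum>i\<in>{m..<j}. \<alpha> i *\<^sub>R e i)"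
      by (meson add_mono norm_triangle_ineq order_trans order_refl)
    also have "\<dots> \<le> \<tau> * norm Fm + c * (\<Sum>i\<in>{m..<j}. \<alpha> i * u i) + s"
    proof (intro add_mono)
      show "norm (T j *\<^sub>R Fm) \<le> \<tau> * norm Fm" using T_le[OF j(2)] T0[of j] by (simp add: mult_right_mono)
      show "norm (\<Sum>i\<in>{m..<j}. \<alpha> i *\<^sub>R e i) \<le> s" using s_ge j by simp
      have "norm (\<Sum>i\<in>{m..<j}. \<alpha> i *\<^sub>R (Fz i - Fm)) \<le> (\<Sum>i\<in>{m..<j}. norm (\<alpha> i *\<^sub>R (Fz i - Fm)))"
        by (rule norm_sum)
      also have "\<dots> \<le> (\<Sum>i\<in>{m..<j}. \<alpha> i * (c * u i))"
      proof (intro sum_mono)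
        fix i
        have "norm (\<alpha> i *\<^sub>R (Fz i - Fm)) = \<alpha> i * norm (Fz i - Fz m)" using alpha[of i] Fm_eq by simp
        also have "\<dots> \<le> \<alpha> i * (c * u i)" unfolding u_def using Flip alpha[of i] by (intro mult_left_mono) auto
        finally show "norm (\<alpha> i *\<^sub>R (Fz i - Fm)) \<le> \<alpha> i * (c * u i)" .
      qed
      also have "\<dots> = c * (\<Sum>i\<in>{m..<j}. \<alpha> i * u i)" by (simp add: sum_distrib_left algebra_simps)
      finally show "norm (\<Sum>i\<in>{m..<j}. \<alpha> i *\<^sub>R (Fz i - Fm)) \<le> c * (\<Sum>i\<in>{m..<j}. \<alpha> i * u i)" .
    qed
    finally show ?thesis unfolding A_def by simp
  qed

  have u0: "u j \<ge> 0" for j unfolding u_def by simp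
  have gron: "m \<le> j \<longrightarrow> j \<le> n \<longrightarrow> u j \<le> A * exp (c * T j)" for j
  proof (induction j rule: less_induct)
    case (less j)
    show ?case
    proof (intro impI)
      assume j: "m \<le> j" "j \<le> n"
      show "u j \<le> A * exp (c * T j)"
      proof (cases "j = m")
        case True thus ?thesis unfolding u_def using A0 by simp
      next
        case False
        hence jm: "m < j" using j by simp
        have "u j \<le> A + c * (\<Sum>i\<in>{m..<j}. \<alpha> i * u i)" using key jm j(2) by blast
        also have "\<dots> \<le> A + c * (\<Sum>i\<in>{m..<j}. \<alpha> i * (A * exp (c * T i)))"
        proof -
          have "(\<Sum>i\<in>{m..<j}. \<alpha> i * u i) \<le> (\<Sum>i\<in>{m..<j}. \<alpha> i * (A * exp (c * T i)))"
          proof (intro sum_mono)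
            fix i assume "i \<in> {m..<j}"
            hence "u i \<le> A * exp (c * T i)" using less j by auto
            thus "\<alpha> i * u i \<le> \<alpha> i * (A * exp (c * T i))" using alpha[of i] by (intro mult_left_mono) auto
          qed
          thus ?thesis using c0 by (intro add_left_mono mult_left_mono) auto
        qed
        also have "\<dots> = A * (1 + (\<Sum>i\<in>{m..<j}. c * \<alpha> i * exp (c * T i)))"
          by (simp add: sum_distrib_left algebra_simps)
        also have "\<dots> \<le> A * exp (c * T j)"
          using exp_sum_aux[OF j(1), of c \<alpha>] A0 unfolding T_def by (intro mult_left_mono) auto
        finally show ?thesis .
      qed
    qed
  qed
  have Tn: "T n = \<tau>" unfolding T_def \<tau>_def ..
  have ub: "u j \<le> A * exp (c * \<tau>)" if "j \<in> {m<..n}" for j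
  proof -
    have "u j \<le> A * exp (c * T j)" using gron[of j] that by auto
    also have "\<dots> \<le> A * exp (c * \<tau>)" using T_le[of j] that c0 A0
      by (intro mult_left_mono) (auto simp: mult_left_mono)
    finally show ?thesis .
  qed
  have Mz_eq: "Mz = Max (u ` {m<..n})" unfolding Mz_def u_def zz_def ..
  have R1: "d \<le> Mz"
  proof -
    have "norm (x i \<omega> - x m \<omega>) \<le> Mz" if "i \<in> {m<..n}" for i
    proof -
      have "norm (x i \<omega> - x m \<omega>) \<le> u i" using nonexp[of i m] unfolding u_def xx_def .
      also have "u i \<le> Mz" unfolding Mz_eq using fin that by (intro Max_ge) auto
      finally show ?thesis .
    qed
    thus ?thesis unfolding d_def using fin ne by (subst Max_le_iff) auto
  qed
  have expb: "exp (c * \<tau>) \<le> 1 + \<tau> * \<tau>b" unfolding \<tau>b_def using exp_aux[of "c * \<tau>"] by (simp add: algebra_simps)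
  have R2: "Mz \<le> (1 + \<tau> * \<tau>b) * (\<tau> * norm Fm + s)"
  proof -
    have "Mz \<le> A * exp (c * \<tau>)" unfolding Mz_eq using fin ne ub by (subst Max_le_iff) auto
    also have "\<dots> \<le> A * (1 + \<tau> * \<tau>b)" using expb A0 by (intro mult_left_mono) auto
    finally show ?thesis unfolding A_def by (simp add: mult.commute)
  qed
  have R3: "norm emn \<le> \<tau>b * \<tau>^2 * norm Fm + (1 + \<tau>b * \<tau>) * s"
  proof -
    have "emn = - ((\<Sum>i\<in>{m..<n}. \<alpha> i *\<^sub>R (Fz i - Fm)) + (\<Sum>i\<in>{m..<n}. \<alpha> i *\<^sub>R e i))"
      unfolding emn_def Fz_def by simp
    hence "norm emn = norm ((\<Sum>i\<in>{m..<n}. \<alpha> i *\<^sub>R (Fz i - Fm)) + (\<Sum>i\<in>{m..<n}. \<alpha> i *\<^sub>R e i))"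
      by (simp only: norm_minus_cancel)
    also have "\<dots> \<le> norm (\<Sum>i\<in>{m..<n}. \<alpha> i *\<^sub>R (Fz i - Fm)) + norm (\<Sum>i\<in>{m..<n}. \<alpha> i *\<^sub>R e i)"
      by (rule norm_triangle_ineq)
    also have "\<dots> \<le> A * (\<tau> * \<tau>b) + s"
    proof (intro add_mono)
      show "norm (\<Sum>i\<in>{m..<n}. \<alpha> i *\<^sub>R e i) \<le> s" using s_ge[of n] mn by simp
      have "norm (\<Sum>i\<in>{m..<n}. \<alpha> i *\<^sub>R (Fz i - Fm)) \<le> (\<Sum>i\<in>{m..<n}. norm (\<alpha> i *\<^sub>R (Fz i - Fm)))"
        by (rule norm_sum)
      also have "\<dots> \<le> (\<Sum>i\<in>{m..<n}. A * (c * \<alpha> i * exp (c * T i)))"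
      proof (intro sum_mono)
        fix i assume i: "i \<in> {m..<n}"
        have "norm (\<alpha> i *\<^sub>R (Fz i - Fm)) = \<alpha> i * norm (Fz i - Fz m)" using alpha[of i] Fm_eq by simp
        also have "\<dots> \<le> \<alpha> i * (c * u i)" unfolding u_def using Flip alpha[of i] by (intro mult_left_mono) auto
        also have "\<dots> \<le> \<alpha> i * (c * (A * exp (c * T i)))"
          using gron[of i] i alpha[of i] c0 by (intro mult_left_mono) auto
        finally show "norm (\<alpha> i *\<^sub>R (Fz i - Fm)) \<le> A * (c * \<alpha> i * exp (c * T i))"
          by (simp add: algebra_simps)
      qed
      also have "\<dots> = A * (\<Sum>i\<in>{m..<n}. c * \<alpha> i * exp (c * T i))" by (simp add: sum_distrib_left)
      also have "\<dots> \<le> A * (exp (c * \<tau>) - 1)"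
        using exp_sum_aux[of m n c \<alpha>] mn A0 Tn unfolding T_def by (intro mult_left_mono) auto
      also have "\<dots> \<le> A * (\<tau> * \<tau>b)" using expb A0 by (intro mult_left_mono) auto
      finally show "norm (\<Sum>i\<in>{m..<n}. \<alpha> i *\<^sub>R (Fz i - Fm)) \<le> A * (\<tau> * \<tau>b)" .
    qed
    also have "\<dots> = \<tau>b * \<tau>^2 * norm Fm + (1 + \<tau>b * \<tau>) * s"
      unfolding A_def by (simp add: algebra_simps power2_eq_square)
    finally show ?thesis .
  qed
  show ?thesis unfolding Let_def using R1 R2 R3
    unfolding d_def Mz_def \<tau>b_def c_def emn_def Fm_def s_def e_def \<tau>_def L_def by blast
qed

end
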